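(* Fix $n>K\ge1$ and a nonrandom $n\times K$ design matrix $\mathbf{X}$ with rows $\mathbf{x}_i$ satisfying $\mathbf{X}^t\mathbf{X}=n\mathbf{I}$. Suppose $Y_i=\mathbf{x}_i^t\boldsymbol{\beta}_0+\varepsilon_i$, $i=1,\dots,n$, where $\varepsilon_i$ are i.i.d. $N(0,\sigma_0^2)$, $\sigma_0^2>0$, and $\boldsymbol{\beta}_0\in\mathbb{R}^K$ has $k_0$ nonzero coordinates with $1\le k_0<K$. Consider the rescaled spike and slab model with $\lambda_n=n$, with $\sigma^2\equiv1$ (i.e. $\mu\{\sigma^2=1\}=1$) and with $\boldsymbol{\beta}\sim N(\mathbf{0},\boldsymbol{\Gamma}_0)$, $\boldsymbol{\Gamma}_0=\mathrm{diag}(\gamma_{1,0},\dots,\gamma_{K,0})$, for a fixed hypervariance vector $\boldsymbol{\gamma}_0$ with positive entries. Then for each $0<\delta<1/2$ there exists such a $\boldsymbol{\gamma}_0$ for which $\mathcal{R}_Z(\alpha)<\mathcal{R}_O(\alpha)$ for all $\alpha\in[\delta,1-\delta]$.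
   Context: Let $\mathbf{Y}=(Y_1,\dots,Y_n)^t$, $\widehat{\boldsymbol{\beta}}_n^\circ=(\mathbf{X}^t\mathbf{X})^{-1}\mathbf{X}^t\mathbf{Y}=(\widehat\beta_{1,n}^\circ,\dots,\widehat\beta_{K,n}^\circ)^t$ (OLS) and $\widehat\sigma_n^2=\|\mathbf{Y}-\mathbf{X}\widehat{\boldsymbol{\beta}}_n^\circ\|^2/(n-K)$. Rescaled spike and slab model: $Y_i^*=\widehat\sigma_n^{-1}n^{1/2}Y_i$, and as data $\mathbf{Y}^*$ is modeled by $(Y_i^*\mid\boldsymbol{\beta},\sigma^2)$ independent $N(\mathbf{x}_i^t\boldsymbol{\beta},\sigma^2\lambda_n)$, with the stated priors on $\boldsymbol{\beta}$ and $\sigma^2$; $\widehat{\boldsymbol{\beta}}_n^*=(\widehat\beta_{1,n}^*,\dots,\widehat\beta_{K,n}^* )^t$ is the posterior mean of $\boldsymbol{\beta}$ given $\mathbf{Y}^*$. Let $s_{kk}$ be the $k$th diagonal entry of $(\mathbf{X}^t\mathbf{X}/n)^{-1}$ and $\widehat Z_{k,n}=n^{1/2}\widehat\beta_{k,n}^\circ/(\widehat\sigma_n s_{kk}^{1/2})$. Let $z_{\alpha/2}$ be the $100(1-\alpha/2)$ percentile of the standard normal distribution, and $\mathcal{B}_0=\{k:\beta_{k,0}=0\}$. Define $\mathcal{R}_Z(\alpha)=\sum_{k\in\mathcal{B}_0}\mathbb{P}\{|\widehat\beta_{k,n}^*|\ge z_{\alpha/2}\}+\sum_{k\notin\mathcal{B}_0}\mathbb{P}\{|\widehat\beta_{k,n}^*|<z_{\alpha/2}\}$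 and $\mathcal{R}_O(\alpha)=\sum_{k\in\mathcal{B}_0}\mathbb{P}\{|\widehat Z_{k,n}|\ge z_{\alpha/2}\}+\sum_{k\notin\mathcal{B}_0}\mathbb{P}\{|\widehat Z_{k,n}|<z_{\alpha/2}\}$, probabilities taken under the true model. *)

theory Defs
  imports "HOL-Probability.Probability"
begin

definition z_crit :: "real \<Rightarrow> real" where
  "z_crit a = (THE z. cdf std_normal_distribution z = 1 - a / 2)"

definition noise_measure :: "real \<Rightarrow> (real^'n::finite) measure" where
  "noise_measure s0 = density lborel (\<lambda>e. \<Prod>i\<in>UNIV. normal_density 0 s0 (e $ i))"

definition obs :: "real^'k^'n \<Rightarrow> real^'k \<Rightarrow> real^'n \<Rightarrow> real^'n"
  where "obs X b0 e = X *v b0 + e"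

definition ols :: "real^'k^'n \<Rightarrow> real^'n \<Rightarrow> real^'k::finite" where
  "ols X Y = matrix_inv (transpose X ** X) *v (transpose X *v Y)"

definition sigma_hat :: "real^'k::finite^'n::finite \<Rightarrow> real^'n \<Rightarrow> real" where
  "sigma_hat X Y = sqrt ((norm (Y - X *v ols X Y))^2 / (real CARD('n) - real CARD('k)))"

definition rescaled :: "real^'k::finite^'n::finite \<Rightarrow> real^'n \<Rightarrow> real^'n" where
  "rescaled X Y = (sqrt (real CARD('n)) / sigma_hat X Y) *\<^sub>R Y"

text \<open>Likelihood of data y under the model y_i ~ N(x_i^t b, sigma^2 lambda_n) with
  sigma^2 = 1 and lambda_n = n.\<close>
definition lik :: "real^'k::finite^'n::finite \<Rightarrow> real^'n \<Rightarrow> real^'k \<Rightarrow> real" where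
  "lik X y b = (\<Prod>i\<in>UNIV. normal_density ((X *v b) $ i) (sqrt (real CARD('n))) (y $ i))"

definition prior_dens :: "real^'k::finite \<Rightarrow> real^'k \<Rightarrow> real" where
  "prior_dens g b = (\<Prod>k\<in>UNIV. normal_density 0 (sqrt (g $ k)) (b $ k))"

definition post_mean :: "real^'k::finite^'n::finite \<Rightarrow> real^'k \<Rightarrow> real^'n \<Rightarrow> 'k \<Rightarrow> real" where
  "post_mean X g y k =
     (\<integral>b. b $ k * lik X y b * prior_dens g b \<partial>lborel) / (\<integral>b. lik X y b * prior_dens g b \<partial>lborel)"

definition beta_star :: "real^'k::finite^'n::finite \<Rightarrow> real^'k \<Rightarrow> real^'k \<Rightarrow> real^'n \<Rightarrow> 'k \<Rightarrow> real" where
  "beta_star X b0 g e k = post_mean X g (rescaled X (obs X b0 e)) k"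

definition z_stat :: "real^'k::finite^'n::finite \<Rightarrow> real^'k \<Rightarrow> real^'n \<Rightarrow> 'k \<Rightarrow> real" where
  "z_stat X b0 e k =
     (let Y = obs X b0 e;
          s = matrix_inv ((1 / real CARD('n)) *\<^sub>R (transpose X ** X)) $ k $ k
      in sqrt (real CARD('n)) * ols X Y $ k / (sigma_hat X Y * sqrt s))"

definition risk_Z :: "real^'k::finite^'n::finite \<Rightarrow> real^'k \<Rightarrow> real \<Rightarrow> real^'k \<Rightarrow> real \<Rightarrow> real" where
  "risk_Z X b0 s0 g a =
     (\<Sum>k\<in>{k. b0 $ k = 0}. measure (noise_measure s0) {e. \<bar>beta_star X b0 g e k\<bar> \<ge> z_crit a})
   + (\<Sum>k\<in>{k. b0 $ k \<noteq> 0}. measure (noise_measure s0) {e. \<bar>beta_star X b0 g e k\<bar> < z_crit a})"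

definition risk_O :: "real^'k::finite^'n::finite \<Rightarrow> real^'k \<Rightarrow> real \<Rightarrow> real \<Rightarrow> real" where
  "risk_O X b0 s0 a =
     (\<Sum>k\<in>{k. b0 $ k = 0}. measure (noise_measure s0) {e. \<bar>z_stat X b0 e k\<bar> \<ge> z_crit a})
   + (\<Sum>k\<in>{k. b0 $ k \<noteq> 0}. measure (noise_measure s0) {e. \<bar>z_stat X b0 e k\<bar> < z_crit a})"

end

theory Submission
  imports Defs
begin


lemma prod_vec_basis:
  fixes g :: "'n::finite \<Rightarrow> real \<Rightarrow> 'b::comm_monoid_mult"
  shows "(\<Prod>i\<in>UNIV. g i (x$i)) = (\<Prod>b\<in>(Basis::(real^'n) set). g (axis_index b) (x \<bullet> b))"
proof -
  have B: "(Basis::(real^'n) set) = (\<lambda>i. axis i 1) ` UNIV"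
    by (auto simp: Basis_vec_def)
  have inj: "inj (\<lambda>i::'n. axis i (1::real))"
    by (auto simp: inj_def axis_eq_axis)
  show ?thesis unfolding B
    by (subst prod.reindex[OF inj]) (simp add: inner_axis)
qed

lemma vec_lborel_integral_prod:
  fixes g :: "'n::finite \<Rightarrow> real \<Rightarrow> real"
  assumes int: "\<And>i. integrable lborel (g i)"
  shows "integrable lborel (\<lambda>x::real^'n. \<Prod>i\<in>UNIV. g i (x$i))"
    and "(\<integral>x. (\<Prod>i\<in>UNIV. g i (x$i)) \<partial>(lborel::(real^'n) measure)) = (\<Prod>i\<in>UNIV. \<integral>t. g i t \<partial>lborel)"
proof -
  have ps: "product_sigma_finite (\<lambda>_::real^'n::finite. lborel::real measure)"
    by (simp add: product_sigma_finite_def lborel.sigma_finite_measure_axioms)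
  define T where "T = (\<lambda>f. \<Sum>b\<in>(Basis::(real^'n) set). f b *\<^sub>R b)"
  have Tm: "T \<in> measurable (\<Pi>\<^sub>M b\<in>Basis. lborel) borel"
    unfolding T_def by measurable
  have L: "lborel = distr (\<Pi>\<^sub>M b\<in>Basis. lborel) borel T"
    unfolding T_def by (rule lborel_eq)
  have Ti: "T f \<bullet> b = f b" if "b \<in> Basis" for f b
    using that by (simp add: T_def inner_sum_left inner_Basis if_distrib cong: if_cong)
  have eq: "(\<Prod>i\<in>UNIV. g i (T f $ i)) = (\<Prod>b\<in>Basis. g (axis_index b) (f b))" for f
    unfolding prod_vec_basis by (intro prod.cong) (simp_all add: Ti)
  have gm: "g i \<in> borel_measurable borel" for i using int[of i] by auto
  have Fm: "(\<lambda>x::real^'n. \<Prod>i\<in>UNIV. g i (x$i)) \<in> borel_measurable borel"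
    using gm by measurable
  have I1: "integrable (\<Pi>\<^sub>M b\<in>(Basis::(real^'n) set). lborel) (\<lambda>f. \<Prod>b\<in>Basis. g (axis_index b) (f b))"
    by (rule product_sigma_finite.product_integrable_prod[OF ps, of Basis "\<lambda>b. g (axis_index b)"]) (auto intro: int)
  show "integrable lborel (\<lambda>x::real^'n. \<Prod>i\<in>UNIV. g i (x$i))"
    apply (subst L)
    apply (subst integrable_distr_eq[OF Tm Fm])
    using I1 by (simp add: eq)
  have "(\<integral>x. (\<Prod>i\<in>UNIV. g i (x$i)) \<partial>(lborel::(real^'n) measure))
        = (\<integral>f. (\<Prod>b\<in>(Basis::(real^'n) set). g (axis_index b) (f b)) \<partial>(\<Pi>\<^sub>M b\<in>(Basis::(real^'n) set). lborel))"
    apply (subst L)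
    apply (subst integral_distr[OF Tm Fm])
    by (simp add: eq)
  also have "\<dots> = (\<Prod>b\<in>(Basis::(real^'n) set). \<integral>t. g (axis_index b) t \<partial>lborel)"
    by (rule product_sigma_finite.product_integral_prod[OF ps, of Basis "\<lambda>b. g (axis_index b)"]) (auto intro: int)
  also have "\<dots> = (\<Prod>i\<in>UNIV. \<integral>t. g i t \<partial>lborel)"
    using prod_vec_basis[of "\<lambda>i _. \<integral>t. g i t \<partial>lborel" 0] by simp
  finally show "(\<integral>x. (\<Prod>i\<in>UNIV. g i (x$i)) \<partial>(lborel::(real^'n) measure)) = (\<Prod>i\<in>UNIV. \<integral>t. g i t \<partial>lborel)" .
qed

lemma vec_lborel_nn_integral_prod:
  fixes g :: "'n::finite \<Rightarrow> real \<Rightarrow> real"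
  assumes [measurable]: "\<And>i. g i \<in> borel_measurable borel" and nn: "\<And>i t. 0 \<le> g i t"
  shows "(\<integral>\<^sup>+x. ennreal (\<Prod>i\<in>UNIV. g i (x$i)) \<partial>(lborel::(real^'n) measure)) = (\<Prod>i\<in>UNIV. \<integral>\<^sup>+t. g i t \<partial>lborel)"
proof -
  have "(\<integral>\<^sup>+x. ennreal (\<Prod>i\<in>UNIV. g i (x$i)) \<partial>(lborel::(real^'n) measure))
     = (\<integral>\<^sup>+x. (\<Prod>b\<in>(Basis::(real^'n) set). g (axis_index b) (x \<bullet> b)) \<partial>lborel)"
    by (simp add: prod_vec_basis)
  also have "\<dots> = (\<integral>\<^sup>+x. (\<Prod>b\<in>(Basis::(real^'n) set). ennreal (g (axis_index b) (x \<bullet> b))) \<partial>lborel)"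
    by (simp add: prod_ennreal nn)
  also have "\<dots> = (\<Prod>b\<in>(Basis::(real^'n) set). (\<integral>\<^sup>+x. g (axis_index b) x \<partial>lborel))"
    by (rule nn_integral_lborel_prod[of "\<lambda>b x. ennreal (g (axis_index b) x)"]) (auto simp: nn)
  also have "\<dots> = (\<Prod>i\<in>UNIV. \<integral>\<^sup>+t. g i t \<partial>lborel)"
    using prod_vec_basis[of "\<lambda>i _. \<integral>\<^sup>+t. g i t \<partial>lborel" 0] by simp
  finally show ?thesis .
qed



lemma mat_scale: "(mat c :: real^'n::finite^'n) = c *\<^sub>R mat 1"
  by (simp add: vec_eq_iff mat_def)

lemma mat_mult_left: "mat c ** (A::real^'m^'n::finite) = c *\<^sub>R A"
  by (metis mat_scale matrix_mul_lid scalar_matrix_assoc)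

lemma mat_vec: "mat c *v (x::real^'n::finite) = c *\<^sub>R x"
  by (metis mat_scale matrix_vector_mul_lid scaleR_matrix_vector_assoc)

lemma matrix_inv_mat:
  assumes "(c::real) \<noteq> 0"
  shows "matrix_inv (mat c :: real^'n::finite^'n) = mat (1/c)"
  unfolding matrix_inv_def
proof (rule some_equality)
  show "mat c ** mat (1 / c) = mat 1 \<and> mat (1 / c) ** (mat c :: real^'n::finite^'n) = mat 1"
    using assms by (simp add: mat_mult_left mat_scale[of "1/c"] mat_scale[of c] matrix_scalar_ac[symmetric] scalar_matrix_assoc[symmetric])
next
  fix A' :: "real^'n^'n" assume "mat c ** A' = mat 1 \<and> A' ** mat c = mat 1"
  then have "c *\<^sub>R A' = mat 1" by (simp add: mat_mult_left)
  then have "(1/c) *\<^sub>R (c *\<^sub>R A') = (1/c) *\<^sub>R mat 1" by simp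
  then show "A' = mat (1/c)" using assms by (simp add: vec_eq_iff mat_def)
qed

lemma ols_formula:
  fixes X :: "real^'k::finite^'n::finite"
  assumes XtX: "transpose X ** X = mat (real CARD('n))"
  shows "ols X Y = (1 / real CARD('n)) *\<^sub>R (transpose X *v Y)"
  unfolding ols_def XtX by (simp add: matrix_inv_mat mat_vec)

lemma s_one:
  fixes X :: "real^'k::finite^'n::finite"
  assumes XtX: "transpose X ** X = mat (real CARD('n))"
  shows "matrix_inv ((1 / real CARD('n)) *\<^sub>R (transpose X ** X)) $ k $ k = 1"
proof -
  have "(1 / real CARD('n)) *\<^sub>R (transpose X ** X) = mat 1"
    unfolding XtX by (simp add: vec_eq_iff mat_def)
  then have "matrix_inv ((1 / real CARD('n)) *\<^sub>R (transpose X ** X)) = mat 1"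
    using matrix_inv_mat[of 1] by simp
  then show ?thesis by (simp add: mat_def)
qed

lemma sq_norm_expand:
  fixes X :: "real^'k::finite^'n::finite"
  assumes XtX: "transpose X ** X = mat (real CARD('n))"
  shows "(\<Sum>i\<in>UNIV. (y$i - (X *v b)$i)^2) = y \<bullet> y - 2 * ((transpose X *v y) \<bullet> b) + real CARD('n) * (b \<bullet> b)"
proof -
  have "(\<Sum>i\<in>UNIV. (y$i - (X *v b)$i)^2) = (y - X *v b) \<bullet> (y - X *v b)"
    by (simp add: inner_vec_def power2_eq_square)
  also have "\<dots> = y \<bullet> y - 2 * (y \<bullet> (X *v b)) + (X *v b) \<bullet> (X *v b)"
    by (simp add: inner_diff_left inner_diff_right inner_commute)
  also have "y \<bullet> (X *v b) = (transpose X *v y) \<bullet> b"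
    by (metis dot_lmul_matrix inner_commute vector_transpose_matrix)
  also have "(X *v b) \<bullet> (X *v b) = b \<bullet> (transpose X *v (X *v b))"
    by (metis dot_lmul_matrix inner_commute vector_transpose_matrix)
  also have "transpose X *v (X *v b) = real CARD('n) *\<^sub>R b"
    by (simp add: matrix_vector_mul_assoc XtX mat_vec)
  finally show ?thesis by simp
qed



lemma prod_normal_exp:
  fixes mu s :: "'i::finite \<Rightarrow> real"
  shows "(\<Prod>i\<in>UNIV. normal_density (mu i) (s i) (x i)) =
     (\<Prod>i\<in>UNIV. 1 / sqrt (2 * pi * (s i)\<^sup>2)) * exp (\<Sum>i\<in>UNIV. -(x i - mu i)\<^sup>2 / (2 * (s i)\<^sup>2))"
proof -
  have "exp (\<Sum>i\<in>UNIV. -(x i - mu i)\<^sup>2 / (2 * (s i)\<^sup>2)) = (\<Prod>i\<in>UNIV. exp (-(x i - mu i)\<^sup>2 / (2 * (s i)\<^sup>2)))"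
    by (simp add: exp_sum)
  then show ?thesis by (simp add: normal_density_def prod.distrib[symmetric])
qed

lemma quad_aux:
  fixes A N V B :: real
  assumes "A > 0" "N > 0"
  shows "V * B / N - A * B\<^sup>2 / 2 = -(B - V / (N * A))\<^sup>2 / (2 * (1 / A)) + A * (V / (N * A))\<^sup>2 / 2"
  using assms by (simp add: field_simps power2_eq_square)

lemma lik_prior_factor:
  fixes X :: "real^'k::finite^'n::finite" and y :: "real^'n"
  assumes XtX: "transpose X ** X = mat (real CARD('n))" and g: "\<forall>k. g$k > 0"
  defines "v \<equiv> transpose X *v y"
  defines "a \<equiv> \<lambda>j. 1 + 1 / g$j"
  defines "m \<equiv> \<lambda>j. v$j / (real CARD('n) * a j)"
  defines "s \<equiv> \<lambda>j. sqrt (1 / a j)"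
  shows "\<exists>D>0. \<forall>b. lik X y b * prior_dens g b = D * (\<Prod>j\<in>UNIV. normal_density (m j) (s j) (b$j))"
proof -
  define N where "N = real CARD('n)"
  have N: "N > 0" by (simp add: N_def)
  have a: "a j > 0" for j using g by (simp add: a_def add_pos_pos)
  have s2: "(s j)\<^sup>2 = 1 / a j" for j using a[of j] by (simp add: s_def)
  define C1 where "C1 = (\<Prod>i\<in>(UNIV::'n set). 1 / sqrt (2 * pi * (sqrt N)\<^sup>2)) * (\<Prod>j\<in>(UNIV::'k set). 1 / sqrt (2 * pi * (sqrt (g$j))\<^sup>2))"
  define C2 where "C2 = (\<Prod>j\<in>(UNIV::'k set). 1 / sqrt (2 * pi * (s j)\<^sup>2))"
  define R where "R = - (y \<bullet> y) / (2 * N) + (\<Sum>j\<in>UNIV. a j * (m j)\<^sup>2 / 2)"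
  have C1: "C1 > 0" unfolding C1_def using g[rule_format] N by (intro mult_pos_pos prod_pos) (auto simp: less_imp_le)
  have C2: "C2 > 0" unfolding C2_def using a by (intro prod_pos) (auto simp: s2)
  have key: "(\<Sum>i\<in>UNIV. -((y$i) - (X *v b)$i)\<^sup>2 / (2 * (sqrt N)\<^sup>2)) + (\<Sum>j\<in>UNIV. -(b$j - 0)\<^sup>2 / (2 * (sqrt (g$j))\<^sup>2))
      = (\<Sum>j\<in>UNIV. -(b$j - m j)\<^sup>2 / (2 * (s j)\<^sup>2)) + R" for b
  proof -
    have "(\<Sum>i\<in>UNIV. -((y$i) - (X *v b)$i)\<^sup>2 / (2 * (sqrt N)\<^sup>2)) = - (\<Sum>i\<in>UNIV. ((y$i) - (X *v b)$i)\<^sup>2) / (2 * N)"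
      using N by (simp add: sum_divide_distrib[symmetric] sum_negf)
    also have "\<dots> = - (y \<bullet> y - 2 * (v \<bullet> b) + N * (b \<bullet> b)) / (2 * N)"
      using sq_norm_expand[OF XtX, of y b] by (simp add: v_def N_def)
    also have "\<dots> = - (y \<bullet> y) / (2 * N) + (\<Sum>j\<in>UNIV. v$j * b$j / N - (b$j)\<^sup>2 / 2)"
      using N by (simp add: inner_vec_def sum_subtractf sum_divide_distrib[symmetric] sum_distrib_left field_simps power2_eq_square)
    finally have 1: "(\<Sum>i\<in>UNIV. -((y$i) - (X *v b)$i)\<^sup>2 / (2 * (sqrt N)\<^sup>2)) = - (y \<bullet> y) / (2 * N) + (\<Sum>j\<in>UNIV. v$j * b$j / N - (b$j)\<^sup>2 / 2)" .
    have 2: "(\<Sum>j\<in>UNIV. -(b$j - 0)\<^sup>2 / (2 * (sqrt (g$j))\<^sup>2)) = (\<Sum>j\<in>UNIV. -(b$j)\<^sup>2 / (2 * g$j))"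
      using g by (intro sum.cong) (auto simp: less_imp_le)
    have 3: "v$j * b$j / N - (b$j)\<^sup>2 / 2 + -(b$j)\<^sup>2 / (2 * g$j) = -(b$j - m j)\<^sup>2 / (2 * (s j)\<^sup>2) + a j * (m j)\<^sup>2 / 2" for j
    proof -
      have "g$j > 0" using g by auto
      then have "(b$j)\<^sup>2 / 2 + (b$j)\<^sup>2 / (2 * g$j) = a j * (b$j)\<^sup>2 / 2"
        by (simp add: a_def field_simps)
      moreover have "m j = v$j / (N * a j)" by (simp add: m_def N_def)
      ultimately show ?thesis unfolding s2 using quad_aux[OF a[of j] N, of "v$j" "b$j"]
        by (simp add: algebra_simps)
    qed
    have 4: "(\<Sum>j\<in>UNIV. v$j * b$j / N - (b$j)\<^sup>2 / 2 + -(b$j)\<^sup>2 / (2 * g$j)) = (\<Sum>j\<in>UNIV. -(b$j - m j)\<^sup>2 / (2 * (s j)\<^sup>2) + a j * (m j)\<^sup>2 / 2)"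
      by (rule sum.cong[OF refl 3])
    show ?thesis unfolding 1 2 R_def using 4 unfolding sum.distrib by linarith
  qed
  show ?thesis
  proof (intro exI[of _ "C1 * exp R / C2"] conjI allI)
    show "C1 * exp R / C2 > 0" using C1 C2 by simp
    fix b :: "real^'k"
    have "lik X y b * prior_dens g b = C1 * exp ((\<Sum>i\<in>UNIV. -((y$i) - (X *v b)$i)\<^sup>2 / (2 * (sqrt N)\<^sup>2)) + (\<Sum>j\<in>UNIV. -(b$j - 0)\<^sup>2 / (2 * (sqrt (g$j))\<^sup>2)))"
      unfolding lik_def prior_dens_def C1_def N_def
      using prod_normal_exp[of "\<lambda>i. (X *v b)$i" "\<lambda>_. sqrt (real CARD('n))" "\<lambda>i. y$i"]
            prod_normal_exp[of "\<lambda>_. 0" "\<lambda>j. sqrt (g$j)" "\<lambda>j. b$j"]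
      by (simp add: exp_add)
    also have "\<dots> = C1 * exp R / C2 * (C2 * exp (\<Sum>j\<in>UNIV. -(b$j - m j)\<^sup>2 / (2 * (s j)\<^sup>2)))"
      unfolding key using C2 by (simp add: exp_add)
    also have "C2 * exp (\<Sum>j\<in>UNIV. -(b$j - m j)\<^sup>2 / (2 * (s j)\<^sup>2)) = (\<Prod>j\<in>UNIV. normal_density (m j) (s j) (b$j))"
      unfolding C2_def using prod_normal_exp[of m s "\<lambda>j. b$j"] by simp
    finally show "lik X y b * prior_dens g b = C1 * exp R / C2 * (\<Prod>j\<in>UNIV. normal_density (m j) (s j) (b$j))" .
  qed
qed



lemma post_mean_formula:
  fixes X :: "real^'k::finite^'n::finite" and y :: "real^'n"
  assumes XtX: "transpose X ** X = mat (real CARD('n))" and g: "\<forall>k. g$k > 0"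
  shows "post_mean X g y k = (g$k / (1 + g$k)) * (transpose X *v y)$k / real CARD('n)"
proof -
  define v where "v = transpose X *v y"
  define a where "a = (\<lambda>j. 1 + 1 / g$j)"
  define m where "m = (\<lambda>j. v$j / (real CARD('n) * a j))"
  define s where "s = (\<lambda>j. sqrt (1 / a j))"
  have a: "a j > 0" for j using g by (simp add: a_def add_pos_pos)
  have s: "s j > 0" for j using a[of j] by (simp add: s_def)
  obtain D where D: "D > 0" and fac: "\<And>b. lik X y b * prior_dens g b = D * (\<Prod>j\<in>UNIV. normal_density (m j) (s j) (b$j))"
    using lik_prior_factor[OF XtX g, of y] unfolding m_def s_def a_def v_def by blast
  define \<psi> where "\<psi> = (\<lambda>j. if j = k then (\<lambda>t. normal_density (m j) (s j) t * t) else normal_density (m j) (s j))"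
  have \<psi>int: "integrable lborel (\<psi> j)" for j
    using s[of j] by (auto simp: \<psi>_def intro: integrable_normal_moment_nz_1)
  have \<psi>I: "(\<integral>t. \<psi> j t \<partial>lborel) = (if j = k then m k else 1)" for j
    using s[of j] by (auto simp: \<psi>_def integral_normal_moment_nz_1)
  have \<phi>int: "integrable lborel (normal_density (m j) (s j))" for j
    using s[of j] by auto
  have \<phi>I: "(\<integral>t. normal_density (m j) (s j) t \<partial>lborel) = 1" for j
    using s[of j] by auto
  have prodeq: "b$k * (\<Prod>j\<in>UNIV. normal_density (m j) (s j) (b$j)) = (\<Prod>j\<in>UNIV. \<psi> j (b$j))" for b :: "real^'k"
  proof -
    have "(\<Prod>j\<in>UNIV. \<psi> j (b$j)) = (\<Prod>j\<in>UNIV. normal_density (m j) (s j) (b$j) * (if j = k then b$j else 1))"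
      by (intro prod.cong) (auto simp: \<psi>_def)
    also have "\<dots> = (\<Prod>j\<in>UNIV. normal_density (m j) (s j) (b$j)) * b$k"
      by (simp add: prod.distrib prod.delta)
    finally show ?thesis by simp
  qed
  have num: "(\<integral>b. b $ k * lik X y b * prior_dens g b \<partial>lborel) = D * m k"
  proof -
    have "(\<integral>b. b $ k * lik X y b * prior_dens g b \<partial>lborel) = (\<integral>b. D * (\<Prod>j\<in>UNIV. \<psi> j (b$j)) \<partial>lborel)"
      by (intro Bochner_Integration.integral_cong refl) (simp add: mult.assoc fac prodeq[symmetric] mult.left_commute[of _ D])
    also have "\<dots> = D * (\<integral>b. (\<Prod>j\<in>UNIV. \<psi> j (b$j)) \<partial>(lborel::(real^'k) measure))"
      by simp
    also have "(\<integral>b. (\<Prod>j\<in>UNIV. \<psi> j (b$j)) \<partial>(lborel::(real^'k) measure)) = (\<Prod>j\<in>UNIV. \<integral>t. \<psi> j t \<partial>lborel)"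
      by (rule vec_lborel_integral_prod(2)[OF \<psi>int])
    also have "\<dots> = m k" unfolding \<psi>I by (simp add: prod.delta)
    finally show ?thesis .
  qed
  have den: "(\<integral>b. lik X y b * prior_dens g b \<partial>lborel) = D"
  proof -
    have "(\<integral>b. lik X y b * prior_dens g b \<partial>lborel) = (\<integral>b. D * (\<Prod>j\<in>UNIV. normal_density (m j) (s j) (b$j)) \<partial>lborel)"
      by (simp add: fac)
    also have "\<dots> = D * (\<integral>b. (\<Prod>j\<in>UNIV. normal_density (m j) (s j) (b$j)) \<partial>(lborel::(real^'k) measure))"
      by simp
    also have "(\<integral>b. (\<Prod>j\<in>UNIV. normal_density (m j) (s j) (b$j)) \<partial>(lborel::(real^'k) measure)) = (\<Prod>j\<in>UNIV. \<integral>t. normal_density (m j) (s j) t \<partial>lborel)"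
      by (rule vec_lborel_integral_prod(2)[OF \<phi>int])
    also have "\<dots> = 1" unfolding \<phi>I by simp
    finally show ?thesis by simp
  qed
  have "post_mean X g y k = m k" unfolding post_mean_def num den using D by simp
  also have "m k = (g$k / (1 + g$k)) * (transpose X *v y)$k / real CARD('n)"
    using g[rule_format, of k] unfolding m_def a_def v_def by (simp add: field_simps)
  finally show ?thesis .
qed



lemma density_null_iff:
  fixes f :: "'a::euclidean_space \<Rightarrow> real"
  assumes fm: "f \<in> borel_measurable borel" and pos: "\<And>x. f x > 0" and A: "A \<in> sets borel"
  shows "A \<in> null_sets (density lborel f) \<longleftrightarrow> A \<in> null_sets lborel"
proof -
  have fm': "(\<lambda>x. ennreal (f x)) \<in> borel_measurable lborel" using fm by simp
  have "A \<in> null_sets (density lborel f) \<longleftrightarrow> A \<in> sets lborel \<and> (AE x in lborel. x \<in> A \<longrightarrow> ennreal (f x) = 0)"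
    by (rule null_sets_density_iff[OF fm'])
  also have "\<dots> \<longleftrightarrow> A \<in> sets lborel \<and> (AE x in lborel. x \<notin> A)"
  proof -
    have "(x \<in> A \<longrightarrow> ennreal (f x) = 0) \<longleftrightarrow> x \<notin> A" for x
      using pos[of x] by (simp add: not_le)
    then show ?thesis by simp
  qed
  also have "\<dots> \<longleftrightarrow> A \<in> null_sets lborel"
    using A AE_iff_null_sets[of A lborel] by auto
  finally show ?thesis .
qed

lemma open_pos_lborel:
  fixes S :: "'a::euclidean_space set"
  assumes "open S" "x \<in> S"
  shows "emeasure lborel S > 0"
proof -
  obtain a b where ab: "box a b \<subseteq> S" "x \<in> box a b" "\<forall>i\<in>Basis. a \<bullet> i < b \<bullet> i"
    using open_contains_box[OF assms] by blast
  have "0 < emeasure lborel (box a b)"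
    using ab(3) unfolding emeasure_lborel_box_eq
    by (auto intro!: prod_pos simp: less_imp_le inner_diff_left)
  also have "\<dots> \<le> emeasure lborel S"
    using ab(1) assms(1) by (intro emeasure_mono) auto
  finally show ?thesis .
qed

lemma noise_sets [simp, measurable_cong]: "sets (noise_measure s0 :: (real^'n::finite) measure) = sets borel"
  by (simp add: noise_measure_def)

lemma noise_space [simp]: "space (noise_measure s0 :: (real^'n::finite) measure) = UNIV"
  by (simp add: noise_measure_def)

lemma noise_dens_meas: "(\<lambda>e::real^'n::finite. \<Prod>i\<in>UNIV. normal_density 0 s0 (e $ i)) \<in> borel_measurable borel"
  by measurable

lemma noise_prob:
  assumes "s0 > 0"
  shows "prob_space (noise_measure s0 :: (real^'n::finite) measure)"
proof
  have "emeasure (noise_measure s0 :: (real^'n::finite) measure) (space (noise_measure s0)) =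
     (\<integral>\<^sup>+e. ennreal (\<Prod>i\<in>UNIV. normal_density 0 s0 (e $ i)) \<partial>(lborel::(real^'n) measure))"
    unfolding noise_measure_def
    by (simp add: emeasure_density noise_dens_meas[unfolded measurable_lborel2[symmetric]])
  also have "\<dots> = (\<Prod>i\<in>(UNIV::'n set). \<integral>\<^sup>+t. normal_density 0 s0 t \<partial>lborel)"
    by (rule vec_lborel_nn_integral_prod) auto
  also have "(\<integral>\<^sup>+t. normal_density 0 s0 t \<partial>lborel) = 1"
    using assms by (simp add: nn_integral_eq_integral)
  finally show "emeasure (noise_measure s0 :: (real^'n::finite) measure) (space (noise_measure s0)) = 1"
    by simp
qed

lemma noise_null_iff:
  assumes "s0 > 0" and A: "A \<in> sets borel"
  shows "A \<in> null_sets (noise_measure s0 :: (real^'n::finite) measure) \<longleftrightarrow> A \<in> null_sets lborel"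
  unfolding noise_measure_def
  by (rule density_null_iff[OF noise_dens_meas _ A])
     (use assms in \<open>auto intro!: prod_pos normal_density_pos\<close>)



declare transpose_matrix_vector[simp del]

definition resid :: "real^'k::finite^'n::finite \<Rightarrow> real^'n \<Rightarrow> real^'n" where
  "resid X e = e - (1 / real CARD('n)) *\<^sub>R (X *v (transpose X *v e))"

definition shat :: "real^'k::finite^'n::finite \<Rightarrow> real^'n \<Rightarrow> real" where
  "shat X e = sqrt ((norm (resid X e))\<^sup>2 / (real CARD('n) - real CARD('k)))"

definition Wk :: "real^'k::finite^'n::finite \<Rightarrow> real^'k \<Rightarrow> 'k \<Rightarrow> real^'n \<Rightarrow> real" where
  "Wk X b0 k e = sqrt (real CARD('n)) * (b0$k + (transpose X *v e)$k / real CARD('n)) / shat X e"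

lemma XtXv:
  fixes X :: "real^'k::finite^'n::finite"
  assumes XtX: "transpose X ** X = mat (real CARD('n))"
  shows "transpose X *v (X *v v) = real CARD('n) *\<^sub>R v"
  by (simp add: matrix_vector_mul_assoc XtX mat_vec)

lemma z_stat_eq:
  fixes X :: "real^'k::finite^'n::finite"
  assumes XtX: "transpose X ** X = mat (real CARD('n))"
  shows "z_stat X b0 e k = Wk X b0 k e"
proof -
  define N where "N = real CARD('n)"
  have N: "N > 0" by (simp add: N_def)
  have ols: "ols X (obs X b0 e) = b0 + (1 / N) *\<^sub>R (transpose X *v e)"
  proof -
    have "transpose X *v (X *v b0 + e) = N *\<^sub>R b0 + transpose X *v e"
      by (simp only: matrix_vector_right_distrib XtXv[OF XtX, folded N_def])
    then show ?thesis using N unfolding ols_formula[OF XtX] obs_def N_def[symmetric]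
      by (simp add: scaleR_add_right)
  qed
  have res: "obs X b0 e - X *v ols X (obs X b0 e) = resid X e"
    unfolding ols unfolding resid_def obs_def N_def[symmetric]
    by (simp add: matrix_vector_right_distrib matrix_vector_mult_scaleR algebra_simps)
  show ?thesis
    unfolding z_stat_def Let_def s_one[OF XtX] sigma_hat_def res Wk_def shat_def
    by (simp add: ols N_def)
qed

lemma beta_star_eq:
  fixes X :: "real^'k::finite^'n::finite"
  assumes XtX: "transpose X ** X = mat (real CARD('n))" and g: "\<forall>k. g$k > 0"
  shows "beta_star X b0 g e k = (g$k / (1 + g$k)) * z_stat X b0 e k"
  unfolding beta_star_def post_mean_formula[OF XtX g] z_stat_def Let_def s_one[OF XtX]
    rescaled_def ols_formula[OF XtX]
  by (simp add: matrix_vector_mult_scaleR)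

lemma cont_mv: "continuous_on UNIV (\<lambda>e::real^'n::finite. (X::real^'n^'m::finite) *v e)"
  by (intro linear_continuous_on matrix_vector_mul_bounded_linear)

lemma cont_comp_k: "continuous_on UNIV (\<lambda>e::real^'n::finite. ((X::real^'n^'m::finite) *v e) $ k)"
  by (intro continuous_intros cont_mv)

lemma cont_resid: "continuous_on UNIV (resid (X::real^'k::finite^'n::finite))"
  unfolding resid_def[abs_def]
  by (intro continuous_intros continuous_on_compose2[OF cont_mv] ) auto

lemma cont_shat: "continuous_on UNIV (shat (X::real^'k::finite^'n::finite))"
  unfolding shat_def[abs_def] divide_inverse
  by (intro continuous_intros continuous_on_compose2[OF cont_resid]) auto

lemma meas_comp_k [measurable]: "(\<lambda>e::real^'n::finite. ((X::real^'n^'m::finite) *v e) $ k) \<in> borel_measurable borel"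
  by (rule borel_measurable_continuous_onI[OF cont_comp_k])

lemma meas_shat [measurable]: "shat (X::real^'k::finite^'n::finite) \<in> borel_measurable borel"
  by (rule borel_measurable_continuous_onI[OF cont_shat])

lemma meas_Wk [measurable]: "Wk (X::real^'k::finite^'n::finite) b0 k \<in> borel_measurable borel"
  unfolding Wk_def[abs_def] by measurable

lemma shift_props:
  fixes X :: "real^'k::finite^'n::finite" and k :: 'k
  assumes XtX: "transpose X ** X = mat (real CARD('n))"
  defines "u \<equiv> X *v axis k 1"
  shows "resid X (r *\<^sub>R u + e) = resid X e"
    and "(transpose X *v (r *\<^sub>R u + e))$k = r * real CARD('n) + (transpose X *v e)$k"
    and "shat X (r *\<^sub>R u + e) = shat X e"
proof -
  have tu: "transpose X *v u = real CARD('n) *\<^sub>R axis k 1"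
    unfolding u_def by (rule XtXv[OF XtX])
  show 1: "resid X (r *\<^sub>R u + e) = resid X e"
    unfolding resid_def
    by (simp add: matrix_vector_right_distrib matrix_vector_mult_scaleR XtXv[OF XtX] u_def scaleR_add_right algebra_simps)
  show "(transpose X *v (r *\<^sub>R u + e))$k = r * real CARD('n) + (transpose X *v e)$k"
    by (simp add: matrix_vector_right_distrib matrix_vector_mult_scaleR tu axis_def)
  show "shat X (r *\<^sub>R u + e) = shat X e" unfolding shat_def 1 ..
qed



declare transpose_matrix_vector[simp del]

lemma lborel_translate_null:
  fixes c :: "'a::euclidean_space"
  assumes "B \<in> null_sets lborel"
  shows "((+) c) -` B \<in> null_sets lborel"
proof -
  have Bs: "B \<in> sets borel" using assms by auto
  have "emeasure lborel (((+) c) -` B) = emeasure (distr lborel borel ((+) c)) B"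
    using Bs by (subst emeasure_distr) auto
  also have "\<dots> = emeasure lborel B" by (simp add: lborel_distr_plus)
  also have "\<dots> = 0" using assms by auto
  moreover have "((+) c) -` B \<in> sets borel"
    using measurable_sets[of "(+) c" borel borel B] Bs by simp
  ultimately show ?thesis by (auto simp: null_sets_def)
qed

lemma Wk_no_atom:
  fixes X :: "real^'k::finite^'n::finite"
  assumes XtX: "transpose X ** X = mat (real CARD('n))" and s0: "s0 > 0" and t: "t \<noteq> 0"
  shows "measure (noise_measure s0) {e. Wk X b0 k e = t} = 0"
proof -
  define M where "M = (noise_measure s0 :: (real^'n) measure)"
  interpret prob_space M unfolding M_def by (rule noise_prob[OF s0])
  have sM[simp, measurable_cong]: "sets M = sets borel" and spM[simp]: "space M = UNIV"
    by (simp_all add: M_def)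
  define N where "N = real CARD('n)"
  have N: "N > 0" by (simp add: N_def)
  define \<psi> where "\<psi> = (\<lambda>e. sqrt N * (b0$k + (transpose X *v e)$k / N) - t * shat X e)"
  have \<psi>m[measurable]: "\<psi> \<in> borel_measurable borel" unfolding \<psi>_def by measurable
  define u where "u = X *v axis k 1"
  have \<psi>shift: "\<psi> (r *\<^sub>R u + e) = \<psi> e + sqrt N * r" for r e
    unfolding \<psi>_def u_def shift_props[OF XtX] N_def[symmetric] using N
    by (simp add: field_simps)
  interpret D: finite_measure "distr M borel \<psi>"
    by (rule finite_measure_distr) (auto simp: M_def)
  have "countable {x. measure (distr M borel \<psi>) {x} \<noteq> 0}" by (rule D.countable_support)
  then obtain a where a: "measure (distr M borel \<psi>) {a} = 0"
    using uncountable_UNIV_real by (metis (mono_tags, lifting) mem_Collect_eq subsetI countable_subset)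
  have Aa: "{e. \<psi> e = a} \<in> sets borel" by measurable
  have "measure M {e. \<psi> e = a} = 0"
    using a by (subst (asm) measure_distr) (auto simp: vimage_def)
  then have "{e. \<psi> e = a} \<in> null_sets M"
    using Aa by (auto simp: emeasure_eq_measure null_sets_def)
  then have na: "{e. \<psi> e = a} \<in> null_sets lborel"
    using noise_null_iff[OF s0 Aa] by (simp add: M_def)
  have eq: "{e. \<psi> e = 0} = ((+) ((a / sqrt N) *\<^sub>R u)) -` {e. \<psi> e = a}"
    using N by (auto simp: \<psi>shift)
  have "{e. \<psi> e = 0} \<in> null_sets lborel"
    unfolding eq by (rule lborel_translate_null[OF na])
  then have n0: "{e. \<psi> e = 0} \<in> null_sets M"
    using noise_null_iff[OF s0, of "{e. \<psi> e = 0}"] by (simp add: M_def)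
  have sub: "{e. Wk X b0 k e = t} \<subseteq> {e. \<psi> e = 0}"
  proof
    fix e assume "e \<in> {e. Wk X b0 k e = t}"
    then have W: "Wk X b0 k e = t" by simp
    then have "shat X e \<noteq> 0" using t by (auto simp: Wk_def)
    then show "e \<in> {e. \<psi> e = 0}" using W unfolding Wk_def \<psi>_def N_def
      by (simp add: field_simps)
  qed
  have "measure M {e. Wk X b0 k e = t} \<le> measure M {e. \<psi> e = 0}"
    by (rule finite_measure_mono[OF sub]) simp
  also have "\<dots> = 0" using n0 by (simp add: measure_def null_setsD1)
  finally show ?thesis unfolding M_def using measure_nonneg[of "noise_measure s0" "{e. Wk X b0 k e = t}"] by linarith
qed



declare transpose_matrix_vector[simp del]

lemma exists_resid_nz:
  fixes X :: "real^'k::finite^'n::finite"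
  assumes card: "CARD('n) > CARD('k)"
  shows "\<exists>e. resid X e \<noteq> 0"
proof (rule ccontr)
  assume "\<not> (\<exists>e. resid X e \<noteq> 0)"
  then have "\<And>e. e = (1 / real CARD('n)) *\<^sub>R (X *v (transpose X *v e))"
    by (auto simp: resid_def)
  then have "\<And>e. e = X *v ((1 / real CARD('n)) *\<^sub>R (transpose X *v e))"
    by (metis matrix_vector_mult_scaleR)
  then have "UNIV = range ((*v) X)" by blast
  then have "dim (UNIV :: (real^'n) set) = dim (range ((*v) X))" by simp
  also have "\<dots> \<le> dim (UNIV :: (real^'k) set)"
    by (rule dim_image_le[OF matrix_vector_mul_linear])
  finally show False using card by (simp add: dim_UNIV)
qed

lemma Wk_pos:
  fixes X :: "real^'k::finite^'n::finite"
  assumes XtX: "transpose X ** X = mat (real CARD('n))" and s0: "s0 > 0"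
    and card: "CARD('n) > CARD('k)" and b0k: "b0$k = 0"
  shows "measure (noise_measure s0) {e. z < Wk X b0 k e} > 0"
proof -
  define M where "M = (noise_measure s0 :: (real^'n) measure)"
  interpret prob_space M unfolding M_def by (rule noise_prob[OF s0])
  have sM[simp, measurable_cong]: "sets M = sets borel" and spM[simp]: "space M = UNIV"
    by (simp_all add: M_def)
  define N where "N = real CARD('n)"
  have N: "N > 0" by (simp add: N_def)
  have NK: "real CARD('n) - real CARD('k) > 0" using card by simp
  obtain e0 where e0: "resid X e0 \<noteq> 0" using exists_resid_nz[OF card] by blast
  have sh0: "shat X e0 > 0" unfolding shat_def using e0 NK by simp
  define \<psi> where "\<psi> = (\<lambda>e. sqrt N * ((transpose X *v e)$k / N) - z * shat X e)"
  have \<psi>c: "continuous_on UNIV \<psi>" unfolding \<psi>_def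
    using N by (intro continuous_intros cont_comp_k cont_shat) auto
  define u where "u = X *v axis k 1"
  have \<psi>shift: "\<psi> (r *\<^sub>R u + e) = \<psi> e + sqrt N * r" for r e
    unfolding \<psi>_def u_def shift_props[OF XtX] N_def[symmetric] using N
    by (simp add: field_simps)
  define r where "r = (\<bar>\<psi> e0\<bar> + 1) / sqrt N"
  define e1 where "e1 = r *\<^sub>R u + e0"
  have "\<psi> e1 = \<psi> e0 + \<bar>\<psi> e0\<bar> + 1" unfolding e1_def \<psi>shift r_def using N by simp
  then have p1: "\<psi> e1 > 0" by linarith
  have s1: "shat X e1 > 0" unfolding e1_def u_def shift_props[OF XtX] using sh0 .
  define Op where "Op = {e. 0 < \<psi> e} \<inter> {e. 0 < shat X e}"
  have "open Op" unfolding Op_def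
    by (intro open_Int open_Collect_less continuous_on_const \<psi>c cont_shat)
  then have "emeasure lborel Op > 0" using p1 s1 by (intro open_pos_lborel[of Op e1]) (auto simp: Op_def)
  then have "Op \<notin> null_sets lborel" by auto
  moreover have Os: "Op \<in> sets borel" using \<open>open Op\<close> by auto
  ultimately have "Op \<notin> null_sets M" using noise_null_iff[OF s0 Os] by (simp add: M_def)
  then have "emeasure M Op \<noteq> 0" using Os by auto
  then have pos: "measure M Op > 0" by (simp add: emeasure_eq_measure zero_less_measure_iff)
  have "Op \<subseteq> {e. z < Wk X b0 k e}"
  proof
    fix e assume "e \<in> Op"
    then have a: "0 < \<psi> e" and b: "0 < shat X e" by (auto simp: Op_def)
    then show "e \<in> {e. z < Wk X b0 k e}"
      unfolding Wk_def b0k using a unfolding \<psi>_def N_def by (simp add: less_divide_eq mult.commute mult.left_commute)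
  qed
  then have "measure M Op \<le> measure M {e. z < Wk X b0 k e}"
    by (intro finite_measure_mono) auto
  with pos show ?thesis by (simp add: M_def)
qed



abbreviation "SN \<equiv> density lborel std_normal_density"
abbreviation "Phi \<equiv> cdf SN"

lemma SN_rd: "real_distribution SN"
  by (rule real_dist_normal_dist)

lemma SN_null_iff:
  assumes "A \<in> sets borel"
  shows "A \<in> null_sets SN \<longleftrightarrow> A \<in> null_sets lborel"
  by (rule density_null_iff[OF _ _ assms]) (auto intro: normal_density_pos)

lemma SN_atom: "measure SN {x} = 0"
proof -
  have "{x} \<in> null_sets SN" using SN_null_iff[of "{x}"] by auto
  then show ?thesis by (simp add: measure_def null_setsD1)
qed

lemma Phi_cont: "isCont Phi x"
proof -
  interpret real_distribution SN by (rule SN_rd)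
  show ?thesis using isCont_cdf SN_atom by blast
qed

lemma Phi_strict: 
  assumes "x < y" shows "Phi x < Phi y"
proof -
  interpret real_distribution SN by (rule SN_rd)
  have "{x<..y} \<notin> null_sets lborel" using assms by auto
  then have "{x<..y} \<notin> null_sets SN" using SN_null_iff[of "{x<..y}"] by auto
  then have "emeasure SN {x<..y} \<noteq> 0" by auto
  then have "measure SN {x<..y} > 0" by (simp add: emeasure_eq_measure zero_less_measure_iff)
  then show ?thesis using cdf_diff_eq[OF assms] by simp
qed

lemma Phi_le_iff: "Phi x \<le> Phi y \<longleftrightarrow> x \<le> y"
proof -
  interpret real_distribution SN by (rule SN_rd)
  show ?thesis using Phi_strict[of y x] cdf_nondecreasing[of x y] by (cases "x \<le> y") auto
qed

lemma SN_sym: "emeasure SN {..<0} = emeasure SN {0<..}"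
proof -
  have "emeasure SN {0<..} = (\<integral>\<^sup>+x. ennreal (std_normal_density x) * indicator {0<..} x \<partial>lborel)"
    by (simp add: emeasure_density)
  also have "\<dots> = (\<integral>\<^sup>+x. ennreal (std_normal_density x) * indicator {0<..} x \<partial>(distr lborel borel uminus))"
    by (simp add: lborel_distr_uminus)
  also have "\<dots> = (\<integral>\<^sup>+x. ennreal (std_normal_density (-x)) * indicator {0<..} (-x) \<partial>lborel)"
    by (subst nn_integral_distr) auto
  also have "\<dots> = (\<integral>\<^sup>+x. ennreal (std_normal_density x) * indicator {..<0} x \<partial>lborel)"
    by (intro nn_integral_cong) (auto simp: normal_density_def indicator_def)
  also have "\<dots> = emeasure SN {..<0}"
    by (simp add: emeasure_density)
  finally show ?thesis by simp
qed

lemma Phi0: "Phi 0 = 1/2"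
proof -
  interpret real_distribution SN by (rule SN_rd)
  have "measure SN {..<0} = measure SN {0<..}" using SN_sym by (simp add: measure_def)
  moreover have "measure SN ({..<0} \<union> {0}) = measure SN {..<0} + measure SN {0}"
    by (rule finite_measure_Union) auto
  moreover have "{..<0} \<union> {0} = {..0::real}" by auto
  moreover have "measure SN ({..0} \<union> {0<..}) = measure SN {..0} + measure SN {0<..}"
    by (rule finite_measure_Union) auto
  moreover have "{..0} \<union> {0<..} = (UNIV::real set)" by auto
  moreover have "measure SN UNIV = 1" using prob_space by simp
  ultimately show ?thesis using SN_atom[of 0] by (simp add: cdf_def)
qed

lemma Phi_solve:
  assumes "0 < p" "p < 1"
  shows "\<exists>!z. Phi z = p"
proof -
  interpret real_distribution SN by (rule SN_rd)
  have "eventually (\<lambda>x. Phi x > p) at_top"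
    using cdf_lim_at_top_prob assms(2) by (rule order_tendstoD)
  then obtain x1 where x1: "Phi x1 > p" by (auto simp: eventually_at_top_linorder)
  have "eventually (\<lambda>x. Phi x < p) at_bot"
    using cdf_lim_at_bot assms(1) by (rule order_tendstoD)
  then obtain x0 where x0: "Phi x0 < p" by (auto simp: eventually_at_bot_linorder)
  have "x0 \<le> x1" using x0 x1 Phi_le_iff[of x0 x1] by linarith
  moreover have "continuous_on {x0..x1} Phi"
    using Phi_cont by (simp add: continuous_at_imp_continuous_on)
  ultimately obtain z where "Phi z = p" using IVT'[of Phi x0 p x1] x0 x1 by fastforce
  moreover have "Phi z' = p \<Longrightarrow> z' = z" for z'
    using \<open>Phi z = p\<close> Phi_le_iff[of z z'] Phi_le_iff[of z' z] by auto
  ultimately show ?thesis by blast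
qed

lemma z_crit_Phi:
  assumes "0 < a" "a < 1"
  shows "Phi (z_crit a) = 1 - a / 2"
  unfolding z_crit_def
  by (rule theI'[OF Phi_solve]) (use assms in auto)

lemma z_crit_bounds:
  assumes "0 < \<delta>" "\<delta> < 1/2" "a \<in> {\<delta>..1-\<delta>}"
  shows "z_crit (1 - \<delta>) \<le> z_crit a" "z_crit a \<le> z_crit \<delta>" "0 < z_crit (1 - \<delta>)"
proof -
  have a: "0 < a" "a < 1" using assms by auto
  have P1: "Phi (z_crit (1 - \<delta>)) = 1 - (1 - \<delta>)/2" using assms by (intro z_crit_Phi) auto
  have P2: "Phi (z_crit \<delta>) = 1 - \<delta>/2" using assms by (intro z_crit_Phi) auto
  have Pa: "Phi (z_crit a) = 1 - a/2" using a by (rule z_crit_Phi)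
  have "Phi (z_crit (1 - \<delta>)) \<le> Phi (z_crit a)" unfolding P1 Pa using assms by auto
  then show "z_crit (1 - \<delta>) \<le> z_crit a" using Phi_le_iff by blast
  have "Phi (z_crit a) \<le> Phi (z_crit \<delta>)" unfolding P2 Pa using assms by auto
  then show "z_crit a \<le> z_crit \<delta>" using Phi_le_iff by blast
  have "Phi 0 < Phi (z_crit (1 - \<delta>))" unfolding P1 Phi0 using assms by simp
  then show "0 < z_crit (1 - \<delta>)" using Phi_le_iff[of "z_crit (1 - \<delta>)" 0] by linarith
qed



declare transpose_matrix_vector[simp del]

lemma Wk_dist_facts:
  fixes X :: "real^'k::finite^'n::finite"
  assumes XtX: "transpose X ** X = mat (real CARD('n))" and s0: "s0 > 0" and t: "t > 0"
  shows "measure (noise_measure s0) {e. \<bar>Wk X b0 k e\<bar> < t} = cdf (distr (noise_measure s0) borel (\<lambda>e. \<bar>Wk X b0 k e\<bar>)) t"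
    and "measure (noise_measure s0) {e. t \<le> \<bar>Wk X b0 k e\<bar>} = 1 - cdf (distr (noise_measure s0) borel (\<lambda>e. \<bar>Wk X b0 k e\<bar>)) t"
    and "isCont (cdf (distr (noise_measure s0) borel (\<lambda>e. \<bar>Wk X b0 k e\<bar>))) t"
proof -
  define M where "M = (noise_measure s0 :: (real^'n) measure)"
  interpret prob_space M unfolding M_def by (rule noise_prob[OF s0])
  have sM[simp, measurable_cong]: "sets M = sets borel" and spM[simp]: "space M = UNIV"
    by (simp_all add: M_def)
  define \<mu> where "\<mu> = distr M borel (\<lambda>e. \<bar>Wk X b0 k e\<bar>)"
  interpret mu: real_distribution \<mu> unfolding \<mu>_def
    by (rule real_distribution_distr) simp
  have "measure M {e. \<bar>Wk X b0 k e\<bar> = t} \<le> measure M ({e. Wk X b0 k e = t} \<union> {e. Wk X b0 k e = -t})"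
    by (intro finite_measure_mono) auto
  also have "\<dots> \<le> measure M {e. Wk X b0 k e = t} + measure M {e. Wk X b0 k e = -t}"
    by (intro measure_Un_le) auto
  also have "\<dots> = 0" using Wk_no_atom[OF XtX s0, of t b0 k] Wk_no_atom[OF XtX s0, of "-t" b0 k] t
    by (simp add: M_def)
  finally have at0: "measure M {e. \<bar>Wk X b0 k e\<bar> = t} = 0"
    using measure_nonneg[of M "{e. \<bar>Wk X b0 k e\<bar> = t}"] by linarith
  have mat: "measure \<mu> {t} = 0"
    unfolding \<mu>_def using at0 by (subst measure_distr) (auto simp: vimage_def)
  have "cdf \<mu> t = measure \<mu> ({..<t} \<union> {t})"
    by (simp add: cdf_def ivl_disj_un(2)[symmetric])
  also have "\<dots> = measure \<mu> {..<t} + measure \<mu> {t}"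
    by (rule mu.finite_measure_Union) auto
  also have "\<dots> = measure M {e. \<bar>Wk X b0 k e\<bar> < t}"
    unfolding mat unfolding \<mu>_def by (subst measure_distr) (auto simp: vimage_def)
  finally have 1: "measure M {e. \<bar>Wk X b0 k e\<bar> < t} = cdf \<mu> t" by simp
  then show "measure (noise_measure s0) {e. \<bar>Wk X b0 k e\<bar> < t} = cdf (distr (noise_measure s0) borel (\<lambda>e. \<bar>Wk X b0 k e\<bar>)) t"
    by (simp add: M_def \<mu>_def)
  have "{e. t \<le> \<bar>Wk X b0 k e\<bar>} = space M - {e. \<bar>Wk X b0 k e\<bar> < t}" by auto
  then have "measure M {e. t \<le> \<bar>Wk X b0 k e\<bar>} = 1 - measure M {e. \<bar>Wk X b0 k e\<bar> < t}"
    using prob_compl[of "{e. \<bar>Wk X b0 k e\<bar> < t}"] by simp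
  then show "measure (noise_measure s0) {e. t \<le> \<bar>Wk X b0 k e\<bar>} = 1 - cdf (distr (noise_measure s0) borel (\<lambda>e. \<bar>Wk X b0 k e\<bar>)) t"
    using 1 by (simp add: M_def \<mu>_def)
  show "isCont (cdf (distr (noise_measure s0) borel (\<lambda>e. \<bar>Wk X b0 k e\<bar>))) t"
    using mu.isCont_cdf mat by (simp add: M_def \<mu>_def)
qed



declare transpose_matrix_vector[simp del]

theorem theorem5:
  fixes X :: "real^'k::finite^'n::finite"
    and b0 :: "real^'k"
    and s0 :: real and \<delta> :: real
  assumes "CARD('n) > CARD('k)"
    and "transpose X ** X = mat (real CARD('n))"
    and "s0 > 0"
    and "\<exists>k. b0 $ k \<noteq> 0" and "\<exists>k. b0 $ k = 0"
    and "0 < \<delta>" and "\<delta> < 1/2"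
  shows "\<exists>g :: real^'k. (\<forall>k. g $ k > 0) \<and>
           (\<forall>a \<in> {\<delta>..1-\<delta>}. risk_Z X b0 s0 g a < risk_O X b0 s0 a)"
proof -
  note card = assms(1) and XtX = assms(2) and s0 = assms(3)
  obtain k0 where k0: "b0$k0 = 0" using assms(5) by blast
  define K0 where "K0 = {k. b0$k = 0}"
  define K1 where "K1 = {k. b0$k \<noteq> 0}"
  have k0K0: "k0 \<in> K0" using k0 by (simp add: K0_def)
  have finK: "finite K0" "finite K1" by auto
  define M where "M = (noise_measure s0 :: (real^'n) measure)"
  interpret prob_space M unfolding M_def by (rule noise_prob[OF s0])
  have sM[simp, measurable_cong]: "sets M = sets borel" and spM[simp]: "space M = UNIV"
    by (simp_all add: M_def)
  define F where "F = (\<lambda>k t. cdf (distr M borel (\<lambda>e. \<bar>Wk X b0 k e\<bar>)) t)"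
  have Flt: "measure M {e. \<bar>Wk X b0 k e\<bar> < t} = F k t" if "t > 0" for k t
    using Wk_dist_facts(1)[OF XtX s0 that, of b0 k] by (simp add: F_def M_def)
  have Fge: "measure M {e. t \<le> \<bar>Wk X b0 k e\<bar>} = 1 - F k t" if "t > 0" for k t
    using Wk_dist_facts(2)[OF XtX s0 that, of b0 k] by (simp add: F_def M_def)
  have Fcont: "isCont (F k) t" if "t > 0" for k t
    using Wk_dist_facts(3)[OF XtX s0 that, of b0 k] by (simp add: F_def M_def)
  have rd: "real_distribution (distr M borel (\<lambda>e. \<bar>Wk X b0 k e\<bar>))" for k
    by (rule real_distribution_distr) simp
  have Fmono: "F k x \<le> F k y" if "x \<le> y" for k x y
    unfolding F_def using finite_borel_measure.cdf_nondecreasing[OF real_distribution.finite_borel_measure_M[OF rd] that] .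
  have Ftop: "(F k \<longlongrightarrow> 1) at_top" for k
    unfolding F_def using real_distribution.cdf_lim_at_top_prob[OF rd] .
  define z1 where "z1 = z_crit (1 - \<delta>)"
  define z2 where "z2 = z_crit \<delta>"
  have dI: "\<delta> \<in> {\<delta>..1-\<delta>}" using assms(6,7) by auto
  have z1pos: "0 < z1" unfolding z1_def by (rule z_crit_bounds(3)[OF assms(6,7) dI])
  have z12: "z1 \<le> z2" unfolding z1_def z2_def by (rule z_crit_bounds(1)[OF assms(6,7) dI])
  have z2pos: "0 < z2" using z1pos z12 by linarith
  define q where "q = measure M {e. z2 < Wk X b0 k0 e}"
  have qpos: "q > 0" unfolding q_def M_def by (rule Wk_pos[OF XtX s0 card k0])
  have "q \<le> measure M {e. z2 \<le> \<bar>Wk X b0 k0 e\<bar>}"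
    unfolding q_def by (intro finite_measure_mono) auto
  then have qF: "q \<le> 1 - F k0 z2" using Fge[OF z2pos] by simp
  have "eventually (\<lambda>x. F k0 x > 1 - q/2) at_top"
    using Ftop qpos by (intro order_tendstoD) auto
  then obtain T0 where T0: "\<And>x. x \<ge> T0 \<Longrightarrow> F k0 x > 1 - q/2"
    by (auto simp: eventually_at_top_linorder)
  define T where "T = max T0 (z2 + 1)"
  have T: "F k0 T > 1 - q/2" "T \<ge> z2 + 1" using T0[of T] by (auto simp: T_def)
  define c0 where "c0 = z1 / T"
  have c0: "0 < c0" "c0 < 1" using z1pos z12 T by (auto simp: c0_def field_simps)
  define G where "G = (\<lambda>t. \<Sum>k\<in>K1. F k t)"
  define S where "S = {z1..2*z2}"
  have "continuous_on S G"
    unfolding G_def S_def using z1pos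
    by (intro continuous_on_sum continuous_at_imp_continuous_on ballI Fcont) auto
  then have "uniformly_continuous_on S G"
    unfolding S_def by (intro compact_uniformly_continuous) auto
  then obtain d where d: "d > 0" and dG: "\<And>x x'. x \<in> S \<Longrightarrow> x' \<in> S \<Longrightarrow> dist x' x < d \<Longrightarrow> dist (G x') (G x) < q/2"
    unfolding uniformly_continuous_on_def using qpos by (metis half_gt_zero)
  define d' where "d' = min d z2"
  have d': "0 < d'" "d' \<le> d" "d' \<le> z2" using d z2pos by (auto simp: d'_def)
  define c1 where "c1 = z2 / (z2 + d'/2)"
  have c1: "0 < c1" "c1 < 1" using z2pos d' by (auto simp: c1_def field_simps)
  define cc where "cc = (\<lambda>k. if b0$k = 0 then c0 else c1)"
  have cc: "0 < cc k" "cc k < 1" for k using c0 c1 by (auto simp: cc_def)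
  define g where "g = (\<chi> k. cc k / (1 - cc k))"
  have gpos: "\<forall>k. g $ k > 0" using cc by (auto simp: g_def)
  have gc: "g$k / (1 + g$k) = cc k" for k
  proof -
    have "1 - cc k > 0" using cc[of k] by simp
    then show ?thesis by (simp add: g_def field_simps)
  qed
  have bs: "beta_star X b0 g e k = cc k * Wk X b0 k e" for e k
    using beta_star_eq[OF XtX gpos] z_stat_eq[OF XtX] gc by simp
  show ?thesis
  proof (intro exI[of _ g] conjI gpos ballI)
    fix a assume aI: "a \<in> {\<delta>..1-\<delta>}"
    define z where "z = z_crit a"
    have z1z: "z1 \<le> z" and zz2: "z \<le> z2"
      unfolding z_def z1_def z2_def using z_crit_bounds[OF assms(6,7) aI] by auto
    have zpos: "0 < z" using z1pos z1z by linarith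
    have setK0: "{e. z \<le> \<bar>beta_star X b0 g e k\<bar>} = {e. z / c0 \<le> \<bar>Wk X b0 k e\<bar>}" if "k \<in> K0" for k
      using that c0 by (auto simp: bs cc_def K0_def abs_mult pos_divide_le_eq mult.commute)
    have setK1: "{e. \<bar>beta_star X b0 g e k\<bar> < z} = {e. \<bar>Wk X b0 k e\<bar> < z / c1}" if "k \<in> K1" for k
      using that c1 by (auto simp: bs cc_def K1_def abs_mult pos_less_divide_eq mult.commute)
    have RZ: "risk_Z X b0 s0 g a = (\<Sum>k\<in>K0. 1 - F k (z / c0)) + (\<Sum>k\<in>K1. F k (z / c1))"
      unfolding risk_Z_def z_def[symmetric] K0_def[symmetric] K1_def[symmetric] M_def[symmetric]
      using zpos c0 c1 by (simp add: setK0 setK1 Fge Flt cong: sum.cong)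
    have RO: "risk_O X b0 s0 a = (\<Sum>k\<in>K0. 1 - F k z) + (\<Sum>k\<in>K1. F k z)"
      unfolding risk_O_def z_def[symmetric] K0_def[symmetric] K1_def[symmetric] M_def[symmetric]
      using zpos by (simp add: z_stat_eq[OF XtX] Fge Flt)
    have Tpos: "T > 0" using T(2) z2pos by linarith
    have zc0: "T \<le> z / c0" using z1z z1pos Tpos by (simp add: c0_def field_simps mult_left_mono)
    have zz0: "z \<le> z / c0" using zpos c0 by (simp add: field_simps)
    have part0: "(\<Sum>k\<in>K0. 1 - F k (z / c0)) < (\<Sum>k\<in>K0. 1 - F k z) - q/2"
    proof -
      have "(\<Sum>k\<in>K0. 1 - F k (z / c0)) = (1 - F k0 (z / c0)) + (\<Sum>k\<in>K0-{k0}. 1 - F k (z / c0))"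
        using finK k0K0 by (simp add: sum.remove)
      also have "(\<Sum>k\<in>K0-{k0}. 1 - F k (z / c0)) \<le> (\<Sum>k\<in>K0-{k0}. 1 - F k z)"
        by (intro sum_mono) (use Fmono[OF zz0] in auto)
      also have "1 - F k0 (z / c0) < (1 - F k0 z) - q/2"
      proof -
        have "F k0 T \<le> F k0 (z / c0)" by (rule Fmono[OF zc0])
        moreover have "F k0 z \<le> F k0 z2" by (rule Fmono[OF zz2])
        ultimately show ?thesis using T(1) qF by linarith
      qed
      also have "(1 - F k0 z) - q/2 + (\<Sum>k\<in>K0-{k0}. 1 - F k z) = (\<Sum>k\<in>K0. 1 - F k z) - q/2"
        using finK k0K0 by (simp add: sum.remove)
      finally show ?thesis by simp
    qed
    have part1: "(\<Sum>k\<in>K1. F k (z / c1)) < (\<Sum>k\<in>K1. F k z) + q/2"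
    proof -
      have zc1: "z / c1 = z + z * d' / (2 * z2)" using z2pos d' by (simp add: c1_def field_simps)
      have "z * d' / (2 * z2) \<le> d' / 2" using zpos zz2 z2pos d' by (simp add: field_simps mult_right_mono)
      then have A: "z / c1 \<le> z + d'/2" using zc1 by linarith
      have B: "z \<le> z / c1" using zc1 zpos d' z2pos by simp
      have zS: "z \<in> S" using z1z zz2 z2pos by (simp add: S_def)
      have zS': "z / c1 \<in> S" using A B z1z zz2 d' by (simp add: S_def)
      have "dist (z / c1) z < d" using A B d' by (simp add: dist_real_def)
      then have "dist (G (z / c1)) (G z) < q/2" by (rule dG[OF zS zS'])
      then have "\<bar>(\<Sum>k\<in>K1. F k (z / c1)) - (\<Sum>k\<in>K1. F k z)\<bar> < q/2"
        by (simp add: G_def dist_real_def)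
      then show ?thesis by linarith
    qed
    show "risk_Z X b0 s0 g a < risk_O X b0 s0 a"
      unfolding RZ RO using part0 part1 by linarith
  qed
qed


end
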